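(* Let $G$ be a plane graph containing no $3$-cycle, $4$-cycle and $5$-cycle that are pairwise adjacent, with a $3$-cycle $C_0$, $s\ge1$, a cover $H$ of $G$ with respect to $L(v)=\{1,\dots,s\}$ for all $v$, $F=(f_1,\dots,f_s)$ with $f_i(v)\in\{0,1,2\}$ and $f_1(v)+\cdots+f_s(v)\ge4$ for all $v$, and a DP-$F$-coloring $R_0$ of $C_0$ that cannot be extended to a DP-$F$-coloring of $(G,H)$, with $|V(G)|$ minimum among all such counterexamples. Let $C=x_1x_2\dots x_m$ be a cycle of $G$ with $V(C)\cap V(C_0)=\emptyset$, let $k\ge1$, and let $K=G[V(C)]$ contain $C$ together with $k-1$ chords of $C$ lying inside $C$, all having the common endpoint $x_1$. Suppose $x_2$ or $x_m$ is not an endpoint of any chord of $C$ in $K$. If $d_G(x_1)\le k+2$ and $d_K(x_1)=k+1$, then there exists $i\in\{2,3,\dots,m\}$ such that $d_G(x_i)\ge5$.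
   Context: Two cycles are adjacent if they share an edge. A cover $H$ of $G$ w.r.t. $L$ has vertex set $\{(u,c):c\in L(u)\}$, each $\{u\}\times L(u)$ is a clique, for each edge $uv$ the edges between $\{u\}\times L(u)$ and $\{v\}\times L(v)$ form a matching, and there are no such edges for non-adjacent $u,v$. A representative set contains exactly one vertex of each $\{v\}\times L(v)$. A DP-$F$-coloring is a representative set $R$ admitting an ordering in which each $(v,i)\in R$ has fewer than $f_i(v)$ $H$-neighbors among earlier elements of $R$; extending $R_0$ means finding a DP-$F$-coloring of $(G,H)$ containing $R_0$ (where $R_0$ is a DP-$F$-coloring with respect to the restriction of $H$ to the vertices over $V(C_0)$). *)

theory Defs
  imports "HOL-Analysis.Analysis"
begin

definition simple_graph :: "'v set \<Rightarrow> 'v set set \<Rightarrow> bool" where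
  "simple_graph V E \<longleftrightarrow> finite V \<and>
     (\<forall>e\<in>E. \<exists>u v. e = {u, v} \<and> u \<noteq> v \<and> u \<in> V \<and> v \<in> V)"

(* Vertices are
   distinct points pos v of the plane (= complex), every edge e is drawn as an
   arc curve e joining the two end points, no arc passes through another
   vertex, and two distinct arcs meet only in common end vertices. *)
definition plane_graph ::
  "'v set \<Rightarrow> 'v set set \<Rightarrow> ('v \<Rightarrow> complex) \<Rightarrow> ('v set \<Rightarrow> real \<Rightarrow> complex) \<Rightarrow> bool" where
  "plane_graph V E pos curve \<longleftrightarrow> simple_graph V E \<and> inj_on pos V \<and>
     (\<forall>e\<in>E. arc (curve e) \<and>
         {pathstart (curve e), pathfinish (curve e)} = pos ` e \<and>
         path_image (curve e) \<inter> pos ` V = pos ` e) \<and>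
     (\<forall>e\<in>E. \<forall>e'\<in>E. e \<noteq> e' \<longrightarrow>
         path_image (curve e) \<inter> path_image (curve e') \<subseteq> pos ` (e \<inter> e'))"

definition is_cycle :: "'v set set \<Rightarrow> 'v list \<Rightarrow> bool" where
  "is_cycle E xs \<longleftrightarrow> length xs \<ge> 3 \<and> distinct xs \<and>
     (\<forall>i < length xs. {xs ! i, xs ! ((i + 1) mod length xs)} \<in> E)"

definition cycle_edges :: "'v list \<Rightarrow> 'v set set" where
  "cycle_edges xs = {{xs ! i, xs ! ((i + 1) mod length xs)} | i. i < length xs}"

definition adjacent_cycles :: "'v list \<Rightarrow> 'v list \<Rightarrow> bool" where
  "adjacent_cycles C D \<longleftrightarrow> cycle_edges C \<inter> cycle_edges D \<noteq> {}"

definition no_adjacent_345 :: "'v set set \<Rightarrow> bool" where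
  "no_adjacent_345 E \<longleftrightarrow> \<not> (\<exists>C3 C4 C5. is_cycle E C3 \<and> is_cycle E C4 \<and> is_cycle E C5 \<and>
      length C3 = 3 \<and> length C4 = 4 \<and> length C5 = 5 \<and>
      adjacent_cycles C3 C4 \<and> adjacent_cycles C3 C5 \<and> adjacent_cycles C4 C5)"

definition degree :: "'v set set \<Rightarrow> 'v \<Rightarrow> nat" where
  "degree E v = card {e \<in> E. v \<in> e}"

definition cycle_image :: "('v set \<Rightarrow> real \<Rightarrow> complex) \<Rightarrow> 'v list \<Rightarrow> complex set" where
  "cycle_image curve xs = (\<Union>e\<in>cycle_edges xs. path_image (curve e))"

definition edge_inside :: "('v \<Rightarrow> complex) \<Rightarrow> ('v set \<Rightarrow> real \<Rightarrow> complex) \<Rightarrow> 'v list \<Rightarrow> 'v set \<Rightarrow> bool" where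
  "edge_inside pos curve C e \<longleftrightarrow> path_image (curve e) - pos ` e \<subseteq> inside (cycle_image curve C)"

(* Cover H of G w.r.t. L(v) = {1..s}; vertices of H are (v,c), c \<in> {1..s};
   HE is the edge set of H. *)
definition dp_cover :: "'v set \<Rightarrow> 'v set set \<Rightarrow> nat \<Rightarrow> ('v \<times> nat) set set \<Rightarrow> bool" where
  "dp_cover V E s HE \<longleftrightarrow>
     (\<forall>h\<in>HE. \<exists>a b. h = {a, b} \<and> a \<noteq> b \<and> fst a \<in> V \<and> fst b \<in> V \<and>
                    snd a \<in> {1..s} \<and> snd b \<in> {1..s}) \<and>
     (\<forall>v\<in>V. \<forall>c\<in>{1..s}. \<forall>c'\<in>{1..s}. c \<noteq> c' \<longrightarrow> {(v, c), (v, c')} \<in> HE) \<and>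
     (\<forall>u\<in>V. \<forall>v\<in>V. u \<noteq> v \<longrightarrow> {u, v} \<notin> E \<longrightarrow> (\<forall>c c'. {(u, c), (v, c')} \<notin> HE)) \<and>
     (\<forall>u\<in>V. \<forall>v\<in>V. u \<noteq> v \<longrightarrow> {u, v} \<in> E \<longrightarrow>
         (\<forall>c c1 c2. {(u, c), (v, c1)} \<in> HE \<longrightarrow> {(u, c), (v, c2)} \<in> HE \<longrightarrow> c1 = c2))"

definition representative :: "'v set \<Rightarrow> nat \<Rightarrow> ('v \<times> nat) set \<Rightarrow> bool" where
  "representative W s R \<longleftrightarrow> R \<subseteq> W \<times> {1..s} \<and> (\<forall>v\<in>W. \<exists>!c. (v, c) \<in> R)"

(* DP-F-coloring over the vertices W (with respect to the restriction of H to the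
   fibres over W); f i v is f_i(v). *)
definition dpF_coloring ::
  "'v set \<Rightarrow> nat \<Rightarrow> ('v \<times> nat) set set \<Rightarrow> (nat \<Rightarrow> 'v \<Rightarrow> nat) \<Rightarrow> ('v \<times> nat) set \<Rightarrow> bool" where
  "dpF_coloring W s HE f R \<longleftrightarrow> representative W s R \<and>
     (\<exists>rs. distinct rs \<and> set rs = R \<and>
        (\<forall>j < length rs. card {r \<in> set (take j rs). {r, rs ! j} \<in> HE}
                            < f (snd (rs ! j)) (fst (rs ! j))))"

definition valid_F :: "'v set \<Rightarrow> nat \<Rightarrow> (nat \<Rightarrow> 'v \<Rightarrow> nat) \<Rightarrow> bool" where
  "valid_F V s f \<longleftrightarrow> (\<forall>v\<in>V. (\<forall>i\<in>{1..s}. f i v \<in> {0, 1, 2}) \<and> (\<Sum>i=1..s. f i v) \<ge> 4)"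

definition counterexample ::
  "'v set \<Rightarrow> 'v set set \<Rightarrow> ('v \<Rightarrow> complex) \<Rightarrow> ('v set \<Rightarrow> real \<Rightarrow> complex) \<Rightarrow> 'v list
   \<Rightarrow> nat \<Rightarrow> ('v \<times> nat) set set \<Rightarrow> (nat \<Rightarrow> 'v \<Rightarrow> nat) \<Rightarrow> ('v \<times> nat) set \<Rightarrow> bool" where
  "counterexample V E pos curve C0 s HE f R0 \<longleftrightarrow>
     plane_graph V E pos curve \<and> no_adjacent_345 E \<and>
     is_cycle E C0 \<and> length C0 = 3 \<and> s \<ge> 1 \<and> dp_cover V E s HE \<and> valid_F V s f \<and>
     dpF_coloring (set C0) s HE f R0 \<and>
     \<not> (\<exists>R. dpF_coloring V s HE f R \<and> R0 \<subseteq> R)"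

definition minimal_counterexample ::
  "'v set \<Rightarrow> 'v set set \<Rightarrow> ('v \<Rightarrow> complex) \<Rightarrow> ('v set \<Rightarrow> real \<Rightarrow> complex) \<Rightarrow> 'v list
   \<Rightarrow> nat \<Rightarrow> ('v \<times> nat) set set \<Rightarrow> (nat \<Rightarrow> 'v \<Rightarrow> nat) \<Rightarrow> ('v \<times> nat) set \<Rightarrow> bool" where
  "minimal_counterexample V E pos curve C0 s HE f R0 \<longleftrightarrow>
     counterexample V E pos curve C0 s HE f R0 \<and>
     (\<forall>(V' :: 'v set) E' pos' curve' C0' s' HE' f' R0'.
        counterexample V' E' pos' curve' C0' s' HE' f' R0' \<longrightarrow> card V \<le> card V')"

end

theory Submission
  imports Defs
begin

definition cnt :: "('a \<times> nat) set set \<Rightarrow> ('a \<times> nat) set \<Rightarrow> 'a \<times> nat \<Rightarrow> nat" where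
  "cnt HE S x = card {r \<in> S. {r, x} \<in> HE}"

definition okrel :: "('a \<times> nat) set set \<Rightarrow> (nat \<Rightarrow> 'a \<Rightarrow> nat) \<Rightarrow> ('a \<times> nat) list \<Rightarrow> ('a \<times> nat) list \<Rightarrow> bool" where
  "okrel HE f A B \<longleftrightarrow> (\<forall>t<length B. cnt HE (set A \<union> set (take t B)) (B ! t) < f (snd (B ! t)) (fst (B ! t)))"

lemma okrel_append: "okrel HE f A (B @ D) \<longleftrightarrow> okrel HE f A B \<and> okrel HE f (A @ B) D"
proof
  assume h: "okrel HE f A (B @ D)"
  have 1: "okrel HE f A B" unfolding okrel_def
  proof (intro allI impI)
    fix t assume t: "t < length B"
    have "t < length (B @ D)" using t by simp
    with h have "cnt HE (set A \<union> set (take t (B @ D))) ((B @ D) ! t) < f (snd ((B @ D) ! t)) (fst ((B @ D) ! t))"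
      unfolding okrel_def by blast
    with t show "cnt HE (set A \<union> set (take t B)) (B ! t) < f (snd (B ! t)) (fst (B ! t))"
      by (simp add: nth_append)
  qed
  have 2: "okrel HE f (A @ B) D" unfolding okrel_def
  proof (intro allI impI)
    fix t assume t: "t < length D"
    have "length B + t < length (B @ D)" using t by simp
    with h have "cnt HE (set A \<union> set (take (length B + t) (B @ D))) ((B @ D) ! (length B + t)) < f (snd ((B @ D) ! (length B + t))) (fst ((B @ D) ! (length B + t)))"
      unfolding okrel_def by blast
    then show "cnt HE (set (A @ B) \<union> set (take t D)) (D ! t) < f (snd (D ! t)) (fst (D ! t))"
      by (simp add: nth_append Un_assoc)
  qed
  from 1 2 show "okrel HE f A B \<and> okrel HE f (A @ B) D" ..
next
  assume h: "okrel HE f A B \<and> okrel HE f (A @ B) D"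
  show "okrel HE f A (B @ D)" unfolding okrel_def
  proof (intro allI impI)
    fix t assume t: "t < length (B @ D)"
    show "cnt HE (set A \<union> set (take t (B @ D))) ((B @ D) ! t) < f (snd ((B @ D) ! t)) (fst ((B @ D) ! t))"
    proof (cases "t < length B")
      case True
      with h show ?thesis unfolding okrel_def by (simp add: nth_append)
    next
      case False
      then obtain u where u: "t = length B + u" by (metis le_Suc_ex not_less)
      with t have "u < length D" by simp
      with h have "cnt HE (set (A @ B) \<union> set (take u D)) (D ! u) < f (snd (D ! u)) (fst (D ! u))"
        unfolding okrel_def by blast
      with u show ?thesis by (simp add: nth_append Un_assoc)
    qed
  qed
qed

lemma okrel_single: "okrel HE f A [x] \<longleftrightarrow> cnt HE (set A) x < f (snd x) (fst x)"
  unfolding okrel_def by auto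

lemma okrel_Nil: "okrel HE f A []"
  unfolding okrel_def by auto

lemma cnt_insert_nonadj: "{y, x} \<notin> HE \<Longrightarrow> cnt HE (insert y S) x = cnt HE S x"
  unfolding cnt_def by (rule arg_cong[where f=card]) auto

lemma cnt_insert_le: "finite S \<Longrightarrow> cnt HE (insert y S) x \<le> cnt HE S x + 1"
  unfolding cnt_def
proof -
  assume "finite S"
  have "{r \<in> insert y S. {r, x} \<in> HE} \<subseteq> insert y {r \<in> S. {r, x} \<in> HE}" by auto
  then have "card {r \<in> insert y S. {r, x} \<in> HE} \<le> card (insert y {r \<in> S. {r, x} \<in> HE})"
    using \<open>finite S\<close> by (intro card_mono) auto
  also have "\<dots> \<le> card {r \<in> S. {r, x} \<in> HE} + 1"
    using \<open>finite S\<close> by (simp add: card_insert_if)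
  finally show "card {r \<in> insert y S. {r, x} \<in> HE} \<le> card {r \<in> S. {r, x} \<in> HE} + 1" .
qed

lemma cnt_Un_le: "finite A \<Longrightarrow> finite B \<Longrightarrow> cnt HE (A \<union> B) x \<le> cnt HE A x + cnt HE B x"
  unfolding cnt_def
proof -
  assume "finite A" "finite B"
  have "{r \<in> A \<union> B. {r, x} \<in> HE} = {r \<in> A. {r, x} \<in> HE} \<union> {r \<in> B. {r, x} \<in> HE}" by auto
  then show "card {r \<in> A \<union> B. {r, x} \<in> HE} \<le> card {r \<in> A. {r, x} \<in> HE} + card {r \<in> B. {r, x} \<in> HE}"
    by (simp add: card_Un_le)
qed

lemma okrel_insert:
  assumes "okrel HE f A B" "set A' = insert y (set A)" "\<forall>x\<in>set B. {y, x} \<notin> HE"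
  shows "okrel HE f A' B"
  unfolding okrel_def
proof (intro allI impI)
  fix t assume t: "t < length B"
  then have "B ! t \<in> set B" by simp
  with assms(3) have ny: "{y, B ! t} \<notin> HE" by blast
  have "set A' \<union> set (take t B) = insert y (set A \<union> set (take t B))" using assms(2) by auto
  then have "cnt HE (set A' \<union> set (take t B)) (B ! t) = cnt HE (set A \<union> set (take t B)) (B ! t)"
    using cnt_insert_nonadj[OF ny] by simp
  with assms(1) t show "cnt HE (set A' \<union> set (take t B)) (B ! t) < f (snd (B ! t)) (fst (B ! t))"
    unfolding okrel_def by simp
qed

lemma greedy:
  assumes "distinct is"
    and "\<And>t col. t < length is \<Longrightarrow> \<exists>i\<in>I. cnt HE (set A \<union> (\<lambda>j. (g j, col j)) ` set (take t is)) (g (is ! t), i) < f i (g (is ! t))"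
  shows "\<exists>col. okrel HE f A (map (\<lambda>j. (g j, col j)) is) \<and> (\<forall>j\<in>set is. col j \<in> I)"
  using assms
proof (induction "is" rule: rev_induct)
  case Nil
  then show ?case by (simp add: okrel_Nil)
next
  case (snoc j js)
  have dj: "distinct js" "j \<notin> set js" using snoc.prems(1) by auto
  have "\<exists>col. okrel HE f A (map (\<lambda>j. (g j, col j)) js) \<and> (\<forall>j\<in>set js. col j \<in> I)"
  proof (rule snoc.IH[OF dj(1)])
    fix t col assume t: "t < length js"
    from snoc.prems(2)[of t col] t show "\<exists>i\<in>I. cnt HE (set A \<union> (\<lambda>j. (g j, col j)) ` set (take t js)) (g (js ! t), i) < f i (g (js ! t))"
      by (simp add: nth_append)
  qed
  then obtain col where col: "okrel HE f A (map (\<lambda>j. (g j, col j)) js)" "\<forall>j\<in>set js. col j \<in> I" by blast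
  from snoc.prems(2)[of "length js" col] obtain i where i: "i \<in> I"
    "cnt HE (set A \<union> (\<lambda>j. (g j, col j)) ` set js) (g j, i) < f i (g j)" by auto
  define col' where "col' = col(j := i)"
  have eqm: "map (\<lambda>j. (g j, col' j)) js = map (\<lambda>j. (g j, col j)) js"
    using dj(2) unfolding col'_def by (intro map_cong) auto
  have "okrel HE f A (map (\<lambda>j. (g j, col' j)) (js @ [j]))"
    unfolding map_append okrel_append eqm
    using col(1) i(2) by (simp add: okrel_single col'_def)
  moreover have "\<forall>j\<in>set (js @ [j]). col' j \<in> I" using col(2) i(1) dj(2) unfolding col'_def by auto
  ultimately show ?case by blast
qed

lemma dp_match:
  assumes dp: "dp_cover V E s HE" and "u \<in> V" "v \<in> V" "u \<noteq> v"
    and "{(u, c), (v, c1)} \<in> HE" "{(u, c), (v, c2)} \<in> HE"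
  shows "c1 = c2"
proof (cases "{u, v} \<in> E")
  case True
  with assms show ?thesis unfolding dp_cover_def by blast
next
  case False
  with assms have "{(u, c), (v, c1)} \<notin> HE" unfolding dp_cover_def by blast
  with assms show ?thesis by blast
qed

lemma dp_nonadj:
  assumes dp: "dp_cover V E s HE" and "u \<in> V" "v \<in> V" "u \<noteq> v" "{u, v} \<notin> E"
  shows "{(u, c), (v, c')} \<notin> HE"
  using assms unfolding dp_cover_def by blast

lemma nb_le_degree:
  assumes "finite E"
  shows "card {w \<in> W. {w, v} \<in> E} \<le> degree E v"
  unfolding degree_def
proof (rule card_inj_on_le[where f = "\<lambda>w. {w, v}"])
  show "inj_on (\<lambda>w. {w, v}) {w \<in> W. {w, v} \<in> E}"
    by (auto simp: inj_on_def doubleton_eq_iff)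
  show "(\<lambda>w. {w, v}) ` {w \<in> W. {w, v} \<in> E} \<subseteq> {e \<in> E. v \<in> e}" by auto
  show "finite {e \<in> E. v \<in> e}" using assms by simp
qed

lemma sum_cnt_le:
  assumes dp: "dp_cover V E s HE" and fin: "finite S" and SV: "fst ` S \<subseteq> V"
    and inj: "inj_on fst S" and v: "v \<in> V" "v \<notin> fst ` S"
  shows "(\<Sum>i\<in>{1..s}. cnt HE S (v, i)) \<le> card {w \<in> fst ` S. {w, v} \<in> E}"
proof -
  let ?A = "\<lambda>i. {r \<in> S. {r, (v, i)} \<in> HE}"
  have disj: "?A i \<inter> ?A i' = {}" if "i \<in> {1..s}" "i' \<in> {1..s}" "i \<noteq> i'" for i i'
  proof (rule ccontr)
    assume "?A i \<inter> ?A i' \<noteq> {}"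
    then obtain r where r: "r \<in> S" "{r, (v, i)} \<in> HE" "{r, (v, i')} \<in> HE" by blast
    obtain u c where rc: "r = (u, c)" by (cases r)
    have "u \<in> V" "u \<noteq> v" using r(1) SV v rc by force+
    from dp_match[OF dp this(1) v(1) this(2)] r rc have "i = i'" by blast
    with that show False by simp
  qed
  have "(\<Sum>i\<in>{1..s}. cnt HE S (v, i)) = (\<Sum>i\<in>{1..s}. card (?A i))" unfolding cnt_def by simp
  also have "\<dots> = card (\<Union>i\<in>{1..s}. ?A i)"
    using fin disj by (intro card_UN_disjoint[symmetric]) auto
  also have "\<dots> \<le> card {r \<in> S. {fst r, v} \<in> E}"
  proof (rule card_mono)
    show "finite {r \<in> S. {fst r, v} \<in> E}" using fin by simp
    show "(\<Union>i\<in>{1..s}. ?A i) \<subseteq> {r \<in> S. {fst r, v} \<in> E}"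
    proof clarify
      fix i u c assume "(u, c) \<in> S" "{(u, c), (v, i)} \<in> HE"
      moreover have "u \<in> V" "u \<noteq> v" using \<open>(u, c) \<in> S\<close> SV v by force+
      ultimately show "{fst (u, c), v} \<in> E" using dp_nonadj[OF dp _ v(1)] by fastforce
    qed
  qed
  also have "\<dots> = card (fst ` {r \<in> S. {fst r, v} \<in> E})"
    using inj by (intro card_image[symmetric]) (auto intro: inj_on_subset)
  also have "\<dots> \<le> card {w \<in> fst ` S. {w, v} \<in> E}"
    using fin by (intro card_mono) auto
  finally show ?thesis .
qed

lemma exists_valid:
  assumes "(\<Sum>i\<in>I. g i) < (\<Sum>i\<in>I. h i)"
  shows "\<exists>i\<in>I. (g i :: nat) < h i"
proof (rule ccontr)
  assume "\<not> ?thesis"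
  then have "(\<Sum>i\<in>I. h i) \<le> (\<Sum>i\<in>I. g i)" by (intro sum_mono) auto
  with assms show False by simp
qed

lemma step_exists:
  assumes dp: "dp_cover V E s HE" and vf: "valid_F V s f" and finE: "finite E"
    and fin: "finite S" and SV: "fst ` S \<subseteq> V"
    and inj: "inj_on fst S" and v: "v \<in> V" "v \<notin> fst ` S"
    and y: "y \<notin> fst ` S" "{y, v} \<in> E" and deg: "degree E v \<le> 4"
  shows "\<exists>i\<in>{1..s}. cnt HE S (v, i) < f i v"
proof (rule exists_valid)
  have "card {w \<in> insert y (fst ` S). {w, v} \<in> E} = card (insert y {w \<in> fst ` S. {w, v} \<in> E})"
    using y by (intro arg_cong[where f=card]) auto
  also have "\<dots> = card {w \<in> fst ` S. {w, v} \<in> E} + 1"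
    using y fin by simp
  finally have "card {w \<in> fst ` S. {w, v} \<in> E} + 1 \<le> degree E v"
    using nb_le_degree[OF finE, of "insert y (fst ` S)" v] by simp
  with deg have "card {w \<in> fst ` S. {w, v} \<in> E} \<le> 3" by simp
  with sum_cnt_le[OF dp fin SV inj v] have "(\<Sum>i\<in>{1..s}. cnt HE S (v, i)) \<le> 3" by simp
  moreover have "4 \<le> (\<Sum>i\<in>{1..s}. f i v)" using vf v unfolding valid_F_def by blast
  ultimately show "(\<Sum>i\<in>{1..s}. cnt HE S (v, i)) < (\<Sum>i\<in>{1..s}. f i v)" by simp
qed

lemma simple_edge_sub:
  assumes "simple_graph V E" "e \<in> E" shows "e \<subseteq> V"
proof -
  from assms obtain u v where "e = {u, v}" "u \<in> V" "v \<in> V" unfolding simple_graph_def by meson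
  then show ?thesis by simp
qed

lemma simple_finE:
  assumes sg: "simple_graph V E" shows "finite E"
proof -
  have "E \<subseteq> Pow V" using simple_edge_sub[OF sg] by blast
  moreover have "finite V" using sg unfolding simple_graph_def by simp
  ultimately show "finite E" by (simp add: finite_subset)
qed

lemma cycle_set_sub:
  assumes sg: "simple_graph V E" and cy: "is_cycle E C" shows "set C \<subseteq> V"
proof
  fix x assume x: "x \<in> set C"
  then obtain i where i: "i < length C" "x = C ! i" by (auto simp: in_set_conv_nth)
  with cy have "{C ! i, C ! ((i + 1) mod length C)} \<in> E" unfolding is_cycle_def by blast
  then have "{C ! i, C ! ((i + 1) mod length C)} \<subseteq> V" by (rule simple_edge_sub[OF sg])
  with i show "x \<in> V" by simp
qed

lemma is_cycle_mono: "is_cycle E' C \<Longrightarrow> E' \<subseteq> E \<Longrightarrow> is_cycle E C"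
  unfolding is_cycle_def by (meson subsetD)

lemma sub_counter:
  assumes ce: "counterexample V E pos curve C0 s HE f R0"
    and disj: "set C0 \<inter> W = {}"
    and noext: "\<not> (\<exists>R. dpF_coloring (V - W) s {h \<in> HE. \<forall>y\<in>h. fst y \<in> V - W} f R \<and> R0 \<subseteq> R)"
  shows "counterexample (V - W) {e \<in> E. e \<subseteq> V - W} pos curve C0 s {h \<in> HE. \<forall>y\<in>h. fst y \<in> V - W} f R0"
proof -
  let ?V = "V - W" and ?E = "{e \<in> E. e \<subseteq> V - W}" and ?H = "{h \<in> HE. \<forall>y\<in>h. fst y \<in> V - W}"
  from ce have pg: "plane_graph V E pos curve" and na: "no_adjacent_345 E" and c0: "is_cycle E C0"
    and l0: "length C0 = 3" and s1: "s \<ge> 1" and dp: "dp_cover V E s HE" and vf: "valid_F V s f"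
    and r0: "dpF_coloring (set C0) s HE f R0"
    unfolding counterexample_def by auto
  have pgc: "simple_graph V E \<and> inj_on pos V \<and>
     (\<forall>e\<in>E. arc (curve e) \<and>
         {pathstart (curve e), pathfinish (curve e)} = pos ` e \<and>
         path_image (curve e) \<inter> pos ` V = pos ` e) \<and>
     (\<forall>e\<in>E. \<forall>e'\<in>E. e \<noteq> e' \<longrightarrow>
         path_image (curve e) \<inter> path_image (curve e') \<subseteq> pos ` (e \<inter> e'))"
    using pg unfolding plane_graph_def .
  note sg = pgc[THEN conjunct1]
  note pinj = pgc[THEN conjunct2, THEN conjunct1]
  note pcur = pgc[THEN conjunct2, THEN conjunct2, THEN conjunct1]
  note pdisj = pgc[THEN conjunct2, THEN conjunct2, THEN conjunct2]
  have c0V: "set C0 \<subseteq> ?V" using cycle_set_sub[OF sg c0] disj by blast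
  have sg': "simple_graph ?V ?E" unfolding simple_graph_def
  proof (intro conjI ballI)
    show "finite ?V" using sg unfolding simple_graph_def by simp
  next
    fix e assume e: "e \<in> ?E"
    then have "e \<in> E" by simp
    with sg obtain u v where uv: "e = {u, v}" "u \<noteq> v" unfolding simple_graph_def by meson
    with e show "\<exists>u v. e = {u, v} \<and> u \<noteq> v \<and> u \<in> ?V \<and> v \<in> ?V" by blast
  qed
  have pinj': "inj_on pos ?V" using pinj by (rule inj_on_subset) blast
  have pcur': "\<forall>e\<in>?E. arc (curve e) \<and> {pathstart (curve e), pathfinish (curve e)} = pos ` e \<and>
         path_image (curve e) \<inter> pos ` ?V = pos ` e"
  proof
    fix e assume e: "e \<in> ?E"
    then have e1: "e \<in> E" "e \<subseteq> ?V" by auto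
    from pcur e1(1) have h: "arc (curve e) \<and> {pathstart (curve e), pathfinish (curve e)} = pos ` e \<and>
      path_image (curve e) \<inter> pos ` V = pos ` e" by (rule bspec)
    have h3: "path_image (curve e) \<inter> pos ` V = pos ` e" using h by (rule conjunct2[THEN conjunct2])
    have "path_image (curve e) \<inter> pos ` ?V = pos ` e"
    proof
      show "path_image (curve e) \<inter> pos ` ?V \<subseteq> pos ` e" using h3 by blast
      have "pos ` e \<subseteq> pos ` ?V" using e1(2) by (rule image_mono)
      then show "pos ` e \<subseteq> path_image (curve e) \<inter> pos ` ?V" using h3 by blast
    qed
    with h show "arc (curve e) \<and> {pathstart (curve e), pathfinish (curve e)} = pos ` e \<and>
         path_image (curve e) \<inter> pos ` ?V = pos ` e" by simp
  qed
  have pdisj': "\<forall>e\<in>?E. \<forall>e'\<in>?E. e \<noteq> e' \<longrightarrow>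
         path_image (curve e) \<inter> path_image (curve e') \<subseteq> pos ` (e \<inter> e')"
  proof (intro ballI impI)
    fix e e' assume "e \<in> ?E" "e' \<in> ?E" "e \<noteq> e'"
    then show "path_image (curve e) \<inter> path_image (curve e') \<subseteq> pos ` (e \<inter> e')"
      using pdisj by simp
  qed
  have pg': "plane_graph ?V ?E pos curve" unfolding plane_graph_def
    using sg' pinj' pcur' pdisj' by (intro conjI)
  have Esub: "?E \<subseteq> E" by blast
  have na': "no_adjacent_345 ?E" unfolding no_adjacent_345_def
  proof
    assume "\<exists>C3 C4 C5. is_cycle ?E C3 \<and> is_cycle ?E C4 \<and> is_cycle ?E C5 \<and>
      length C3 = 3 \<and> length C4 = 4 \<and> length C5 = 5 \<and>
      adjacent_cycles C3 C4 \<and> adjacent_cycles C3 C5 \<and> adjacent_cycles C4 C5"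
    then obtain C3 C4 C5 where "is_cycle ?E C3" "is_cycle ?E C4" "is_cycle ?E C5"
      "length C3 = 3 \<and> length C4 = 4 \<and> length C5 = 5 \<and>
      adjacent_cycles C3 C4 \<and> adjacent_cycles C3 C5 \<and> adjacent_cycles C4 C5" by blast
    then have "is_cycle E C3 \<and> is_cycle E C4 \<and> is_cycle E C5 \<and> length C3 = 3 \<and> length C4 = 4 \<and> length C5 = 5 \<and>
      adjacent_cycles C3 C4 \<and> adjacent_cycles C3 C5 \<and> adjacent_cycles C4 C5"
      using is_cycle_mono[OF _ Esub] by blast
    with na show False unfolding no_adjacent_345_def by blast
  qed
  have c0': "is_cycle ?E C0"
  proof -
    have "\<forall>i<length C0. {C0 ! i, C0 ! ((i + 1) mod length C0)} \<in> ?E"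
    proof (intro allI impI)
      fix i assume i: "i < length C0"
      with c0 have "{C0 ! i, C0 ! ((i + 1) mod length C0)} \<in> E" unfolding is_cycle_def by blast
      moreover have "C0 ! i \<in> set C0" "C0 ! ((i + 1) mod length C0) \<in> set C0"
      proof -
        have "0 < length C0" using i by linarith
        then have "(i + 1) mod length C0 < length C0" by simp
        then show "C0 ! i \<in> set C0" "C0 ! ((i + 1) mod length C0) \<in> set C0" using i by auto
      qed
      ultimately show "{C0 ! i, C0 ! ((i + 1) mod length C0)} \<in> ?E" using c0V by blast
    qed
    with c0 show ?thesis unfolding is_cycle_def by blast
  qed
  have dpc: "(\<forall>h\<in>HE. \<exists>a b. h = {a, b} \<and> a \<noteq> b \<and> fst a \<in> V \<and> fst b \<in> V \<and>
                    snd a \<in> {1..s} \<and> snd b \<in> {1..s}) \<and>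
     (\<forall>v\<in>V. \<forall>c\<in>{1..s}. \<forall>c'\<in>{1..s}. c \<noteq> c' \<longrightarrow> {(v, c), (v, c')} \<in> HE) \<and>
     (\<forall>u\<in>V. \<forall>v\<in>V. u \<noteq> v \<longrightarrow> {u, v} \<notin> E \<longrightarrow> (\<forall>c c'. {(u, c), (v, c')} \<notin> HE)) \<and>
     (\<forall>u\<in>V. \<forall>v\<in>V. u \<noteq> v \<longrightarrow> {u, v} \<in> E \<longrightarrow>
         (\<forall>c c1 c2. {(u, c), (v, c1)} \<in> HE \<longrightarrow> {(u, c), (v, c2)} \<in> HE \<longrightarrow> c1 = c2))"
    using dp unfolding dp_cover_def .
  note d1 = dpc[THEN conjunct1]
  note d2 = dpc[THEN conjunct2, THEN conjunct1]
  note d3 = dpc[THEN conjunct2, THEN conjunct2, THEN conjunct1]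
  note d4 = dpc[THEN conjunct2, THEN conjunct2, THEN conjunct2]
  have dp': "dp_cover ?V ?E s ?H" unfolding dp_cover_def
  proof (intro conjI)
    show "\<forall>h\<in>?H. \<exists>a b. h = {a, b} \<and> a \<noteq> b \<and> fst a \<in> ?V \<and> fst b \<in> ?V \<and>
                    snd a \<in> {1..s} \<and> snd b \<in> {1..s}"
    proof
      fix h assume h: "h \<in> ?H"
      then have hH: "h \<in> HE" by simp
      obtain a b where ab: "h = {a, b} \<and> a \<noteq> b \<and> fst a \<in> V \<and> fst b \<in> V \<and> snd a \<in> {1..s} \<and> snd b \<in> {1..s}"
        using d1[rule_format, OF hH] by (elim exE) (erule that)
      then have ab2: "h = {a, b}" "a \<noteq> b" "snd a \<in> {1..s}" "snd b \<in> {1..s}" by simp_all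
      have "fst a \<in> ?V" "fst b \<in> ?V" using h ab2(1) by simp_all
      with ab2 show "\<exists>a b. h = {a, b} \<and> a \<noteq> b \<and> fst a \<in> ?V \<and> fst b \<in> ?V \<and>
                    snd a \<in> {1..s} \<and> snd b \<in> {1..s}" by (intro exI conjI)
    qed
    show "\<forall>v\<in>?V. \<forall>c\<in>{1..s}. \<forall>c'\<in>{1..s}. c \<noteq> c' \<longrightarrow> {(v, c), (v, c')} \<in> ?H"
    proof (intro ballI impI)
      fix v c c' assume "v \<in> ?V" "c \<in> {1..s}" "c' \<in> {1..s}" "c \<noteq> c'"
      moreover have "v \<in> V" using \<open>v \<in> ?V\<close> by simp
      ultimately have "{(v, c), (v, c')} \<in> HE" using d2[rule_format] by simp
      with \<open>v \<in> ?V\<close> show "{(v, c), (v, c')} \<in> ?H" by simp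
    qed
    show "\<forall>u\<in>?V. \<forall>v\<in>?V. u \<noteq> v \<longrightarrow> {u, v} \<notin> ?E \<longrightarrow> (\<forall>c c'. {(u, c), (v, c')} \<notin> ?H)"
    proof (intro ballI impI allI)
      fix u v c c' assume uv: "u \<in> ?V" "v \<in> ?V" "u \<noteq> v" "{u, v} \<notin> ?E"
      then have "{u, v} \<notin> E" by simp
      moreover have "u \<in> V" "v \<in> V" using uv by simp_all
      ultimately have "{(u, c), (v, c')} \<notin> HE" using d3[rule_format] uv(3) by simp
      then show "{(u, c), (v, c')} \<notin> ?H" by simp
    qed
    show "\<forall>u\<in>?V. \<forall>v\<in>?V. u \<noteq> v \<longrightarrow> {u, v} \<in> ?E \<longrightarrow>
         (\<forall>c c1 c2. {(u, c), (v, c1)} \<in> ?H \<longrightarrow> {(u, c), (v, c2)} \<in> ?H \<longrightarrow> c1 = c2)"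
    proof (intro ballI impI allI)
      fix u v c c1 c2 assume uv: "u \<in> ?V" "v \<in> ?V" "u \<noteq> v" "{u, v} \<in> ?E"
        "{(u, c), (v, c1)} \<in> ?H" "{(u, c), (v, c2)} \<in> ?H"
      then have h: "u \<in> V" "v \<in> V" "{u, v} \<in> E" "{(u, c), (v, c1)} \<in> HE" "{(u, c), (v, c2)} \<in> HE" by auto
      show "c1 = c2" by (rule d4[rule_format, OF h(1) h(2) uv(3) h(3) h(4) h(5)])
    qed
  qed
  have vf': "valid_F ?V s f" using vf unfolding valid_F_def by blast
  have r0': "dpF_coloring (set C0) s ?H f R0"
  proof -
    from r0 have rep: "representative (set C0) s R0" and
      ex: "\<exists>rs. distinct rs \<and> set rs = R0 \<and>
        (\<forall>j < length rs. card {r \<in> set (take j rs). {r, rs ! j} \<in> HE}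
                            < f (snd (rs ! j)) (fst (rs ! j)))"
      unfolding dpF_coloring_def by auto
    from ex obtain rs where rs: "distinct rs" "set rs = R0"
      "\<forall>j < length rs. card {r \<in> set (take j rs). {r, rs ! j} \<in> HE} < f (snd (rs ! j)) (fst (rs ! j))"
      by blast
    have R0V: "\<forall>x\<in>R0. fst x \<in> ?V" using rep c0V unfolding representative_def by auto
    have "\<forall>j < length rs. card {r \<in> set (take j rs). {r, rs ! j} \<in> ?H} < f (snd (rs ! j)) (fst (rs ! j))"
    proof (intro allI impI)
      fix j assume j: "j < length rs"
      have "rs ! j \<in> R0" using j rs(2) by auto
      have "{r \<in> set (take j rs). {r, rs ! j} \<in> ?H} = {r \<in> set (take j rs). {r, rs ! j} \<in> HE}"
      proof -
        have "\<And>r. r \<in> set (take j rs) \<Longrightarrow> r \<in> R0" using rs(2) by (meson in_set_takeD)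
        then show ?thesis using R0V \<open>rs ! j \<in> R0\<close> by auto
      qed
      with rs(3) j show "card {r \<in> set (take j rs). {r, rs ! j} \<in> ?H} < f (snd (rs ! j)) (fst (rs ! j))"
        by simp
    qed
    with rs rep show ?thesis unfolding dpF_coloring_def by blast
  qed
  show ?thesis unfolding counterexample_def
    using pg' na' c0' l0 s1 dp' vf' r0' noext by (intro conjI)
qed

lemma rev_upt_len: "length (rev [lo..<n]) = n - lo" by simp

lemma rev_upt_nth: "t < n - lo \<Longrightarrow> rev [lo..<n] ! t = n - 1 - t"
  by (simp add: rev_nth)

lemma rev_upt_take: "t \<le> n - lo \<Longrightarrow> set (take t (rev [lo..<n])) = {n - t..<n}"
proof -
  assume t: "t \<le> n - lo"
  have "take t (rev [lo..<n]) = rev (drop (length [lo..<n] - t) [lo..<n])" by (simp add: take_rev)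
  also have "drop (length [lo..<n] - t) [lo..<n] = [lo + (n - lo - t)..<n]" by simp
  finally show ?thesis using t by auto
qed

lemma sum_split_one:
  assumes "finite I" "a \<in> I"
  shows "(\<Sum>i\<in>I. g i) = g a + (\<Sum>i\<in>I - {a}. g i)"
  using assms by (simp add: sum.remove)

lemma sum_indicator_card:
  assumes "finite I"
  shows "(\<Sum>i\<in>I. (if i \<in> Q then 1 else 0 :: nat)) = card (I \<inter> Q)"
proof -
  have "(\<Sum>i\<in>{i \<in> I. i \<in> Q}. 1 :: nat) = (\<Sum>i\<in>I. (if i \<in> Q then 1 else 0 :: nat))"
    using assms by (rule sum.inter_filter)
  then have "(\<Sum>i\<in>I. (if i \<in> Q then 1 else 0 :: nat)) = (\<Sum>i\<in>{i \<in> I. i \<in> Q}. 1)" by simp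
  also have "{i \<in> I. i \<in> Q} = I \<inter> Q" by auto
  finally show ?thesis by simp
qed

theorem lemma8:
  fixes V :: "'v set" and E :: "'v set set" and pos :: "'v \<Rightarrow> complex"
    and curve :: "'v set \<Rightarrow> real \<Rightarrow> complex" and C0 C :: "'v list"
    and s k :: nat and HE :: "('v \<times> nat) set set"
    and f :: "nat \<Rightarrow> 'v \<Rightarrow> nat" and R0 :: "('v \<times> nat) set"
  assumes min: "minimal_counterexample V E pos curve C0 s HE f R0"
    and cyc: "is_cycle E C"
    and disj: "set C \<inter> set C0 = {}"
    and k: "k \<ge> 1"
    and chords: "card ({e \<in> E. e \<subseteq> set C} - cycle_edges C) = k - 1"
    and chords_inside: "\<forall>e \<in> {e \<in> E. e \<subseteq> set C} - cycle_edges C.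
                          edge_inside pos curve C e \<and> C ! 0 \<in> e"
    and x2_or_xm: "(\<forall>e \<in> {e \<in> E. e \<subseteq> set C} - cycle_edges C. C ! 1 \<notin> e)
                 \<or> (\<forall>e \<in> {e \<in> E. e \<subseteq> set C} - cycle_edges C. last C \<notin> e)"
    and degG: "degree E (C ! 0) \<le> k + 2"
    and degK: "degree {e \<in> E. e \<subseteq> set C} (C ! 0) = k + 1"
  shows "\<exists>i. 1 \<le> i \<and> i < length C \<and> degree E (C ! i) \<ge> 5"
proof (rule ccontr)
  assume nh: "\<not> ?thesis"
  define n where "n = length C"
  have deg4: "degree E (C ! i) \<le> 4" if "1 \<le> i" "i < n" for i
    using nh that unfolding n_def by force
  have ce: "counterexample V E pos curve C0 s HE f R0"
    using min unfolding minimal_counterexample_def by (rule conjunct1)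
  have minc0: "\<forall>(V' :: 'v set) E' pos' curve' C0' s' HE' f' R0'.
        counterexample V' E' pos' curve' C0' s' HE' f' R0' \<longrightarrow> card V \<le> card V'"
    using min unfolding minimal_counterexample_def by (rule conjunct2)
  have minc: "card V \<le> card V'" if "counterexample V' E' pos' curve' C0' s' HE' f' R0'" for V' :: "'v set" and E' pos' curve' C0' s' HE' f' R0'
    using minc0 that by blast
  from ce have pg: "plane_graph V E pos curve" and dp: "dp_cover V E s HE" and vf: "valid_F V s f"
    and r0: "dpF_coloring (set C0) s HE f R0"
    and noext: "\<not> (\<exists>R. dpF_coloring V s HE f R \<and> R0 \<subseteq> R)"
    unfolding counterexample_def by auto
  have sg: "simple_graph V E" using pg unfolding plane_graph_def by simp
  have finV: "finite V" using sg unfolding simple_graph_def by simp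
  have finE: "finite E" using simple_finE[OF sg] .
  have n3: "3 \<le> n" and dC: "distinct C" and cedge: "\<And>i. i < n \<Longrightarrow> {C ! i, C ! ((i + 1) mod n)} \<in> E"
    using cyc unfolding is_cycle_def n_def by auto
  have esucc: "{C ! i, C ! (i + 1)} \<in> E" if "i + 1 < n" for i
    using cedge[of i] that by simp
  have CV: "set C \<subseteq> V" using cycle_set_sub[OF sg cyc] .
  have CnV: "C ! j \<in> V" if "j < n" for j using CV that unfolding n_def by auto
  have Cinj: "C ! i = C ! j \<longleftrightarrow> i = j" if "i < n" "j < n" for i j
    using dC that unfolding n_def by (simp add: nth_eq_iff_index_eq)
  define V' where "V' = V - set C"
  define H' where "H' = {h \<in> HE. \<forall>y\<in>h. fst y \<in> V'}"
  have "\<exists>R'. dpF_coloring V' s H' f R' \<and> R0 \<subseteq> R'"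
  proof (rule ccontr)
    assume a: "\<not> (\<exists>R'. dpF_coloring V' s H' f R' \<and> R0 \<subseteq> R')"
    have "counterexample (V - set C) {e \<in> E. e \<subseteq> V - set C} pos curve C0 s {h \<in> HE. \<forall>y\<in>h. fst y \<in> V - set C} f R0"
      by (rule sub_counter[OF ce]) (use disj a in \<open>auto simp: V'_def H'_def\<close>)
    then have "card V \<le> card (V - set C)" by (rule minc)
    moreover have "card (V - set C) < card V"
    proof (rule psubset_card_mono[OF finV])
      have "C ! 0 \<in> set C" using n3 unfolding n_def by (intro nth_mem) linarith
      with CV show "V - set C \<subset> V" by blast
    qed
    ultimately show False by simp
  qed
  then obtain R' where R': "dpF_coloring V' s H' f R'" "R0 \<subseteq> R'" by blast
  from R'(1) have rep': "representative V' s R'" unfolding dpF_coloring_def by simp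
  from R'(1) obtain rs' where rs': "distinct rs'" "set rs' = R'"
    "\<forall>j < length rs'. card {r \<in> set (take j rs'). {r, rs' ! j} \<in> H'} < f (snd (rs' ! j)) (fst (rs' ! j))"
    unfolding dpF_coloring_def by blast
  have R'sub: "R' \<subseteq> V' \<times> {1..s}" using rep' unfolding representative_def by simp
  have R'uniq: "\<And>v. v \<in> V' \<Longrightarrow> \<exists>!c. (v, c) \<in> R'" using rep' unfolding representative_def by simp
  have fstR': "fst ` R' = V'"
  proof
    show "fst ` R' \<subseteq> V'" using R'sub by auto
    show "V' \<subseteq> fst ` R'"
    proof
      fix v assume "v \<in> V'"
      then obtain c where "(v, c) \<in> R'" using R'uniq by blast
      then show "v \<in> fst ` R'" by force
    qed
  qed
  have injR': "inj_on fst R'"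
  proof (rule inj_onI)
    fix x y assume xy: "x \<in> R'" "y \<in> R'" "fst x = fst y"
    obtain u c where x: "x = (u, c)" by (cases x)
    obtain u' c' where y: "y = (u', c')" by (cases y)
    have "u \<in> V'" using xy(1) x R'sub by auto
    with R'uniq[OF this] xy x y show "x = y" by auto
  qed
  have finV': "finite V'" using finV unfolding V'_def by simp
  have finR': "finite R'" using R'sub finV' by (meson finite_SigmaI finite_atLeastAtMost finite_subset)
  have ok0: "okrel HE f [] rs'" unfolding okrel_def
  proof (intro allI impI)
    fix t assume t: "t < length rs'"
    have inR: "\<And>r. r \<in> set (take t rs') \<Longrightarrow> r \<in> R'" using rs'(2) by (meson in_set_takeD)
    have tR: "rs' ! t \<in> R'" using t rs'(2) by auto
    have "{r \<in> set (take t rs'). {r, rs' ! t} \<in> H'} = {r \<in> set (take t rs'). {r, rs' ! t} \<in> HE}"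
      using inR tR fstR' unfolding H'_def by auto
    then show "cnt HE (set [] \<union> set (take t rs')) (rs' ! t) < f (snd (rs' ! t)) (fst (rs' ! t))"
      using rs'(3)[rule_format, OF t] unfolding cnt_def by simp
  qed
  have CV': "C ! j \<notin> V'" if "j < n" for j using that unfolding V'_def n_def by simp
  have Sfin: "finite (R' \<union> (\<lambda>j. (C ! j, g j)) ` J)" if "J \<subseteq> {..<n}" for J g
    using that finR' by (meson finite_Un finite_imageI finite_lessThan finite_subset)
  have Sfst: "fst ` (R' \<union> (\<lambda>j. (C ! j, g j)) ` J) = V' \<union> (\<lambda>j. C ! j) ` J" for J g
    using fstR' by (auto simp: image_Un image_image)
  have Sinj: "inj_on fst (R' \<union> (\<lambda>j. (C ! j, g j)) ` J)" if "J \<subseteq> {..<n}" for J g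
  proof (rule inj_onI)
    fix x y assume xy: "x \<in> R' \<union> (\<lambda>j. (C ! j, g j)) ` J" "y \<in> R' \<union> (\<lambda>j. (C ! j, g j)) ` J" "fst x = fst y"
    show "x = y"
    proof (cases "x \<in> R'")
      case True
      show ?thesis
      proof (cases "y \<in> R'")
        case True
        with \<open>x \<in> R'\<close> xy(3) injR' show ?thesis by (meson inj_onD)
      next
        case False
        with xy(2) obtain j where j: "j \<in> J" "y = (C ! j, g j)" by blast
        have "fst x \<in> V'" using \<open>x \<in> R'\<close> fstR' by blast
        moreover have "j < n" using j(1) that by blast
        ultimately show ?thesis using xy(3) j(2) CV'[of j] by (metis fst_conv)
      qed
    next
      case False
      with xy(1) obtain j where j: "j \<in> J" "x = (C ! j, g j)" by blast
      show ?thesis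
      proof (cases "y \<in> R'")
        case True
        have "fst y \<in> V'" using \<open>y \<in> R'\<close> fstR' by blast
        moreover have "j < n" using j(1) that by blast
        ultimately show ?thesis using xy(3) j(2) CV'[of j] by (metis fst_conv)
      next
        case False
        with xy(2) obtain j' where j': "j' \<in> J" "y = (C ! j', g j')" by blast
        moreover have "j < n" "j' < n" using j(1) j'(1) that by blast+
        ultimately show ?thesis using j xy(3) Cinj by auto
      qed
    qed
  qed
  have Snotin: "C ! j \<notin> V' \<union> (\<lambda>j. C ! j) ` J" if "J \<subseteq> {..<n}" "j < n" "j \<notin> J" for J j
    using that CV' Cinj by auto
  have SV: "V' \<union> (\<lambda>j. C ! j) ` J \<subseteq> V" if "J \<subseteq> {..<n}" for J
    using that CnV unfolding V'_def by auto
  have stepJ: "\<exists>i\<in>{1..s}. cnt HE (R' \<union> (\<lambda>u. (C ! u, g u)) ` J) (C ! j, i) < f i (C ! j)"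
    if "J \<subseteq> {..<n}" "j < n" "j \<notin> J" "j' < n" "j' \<notin> J" "{C ! j', C ! j} \<in> E" "1 \<le> j" for J g j j'
  proof (rule step_exists[OF dp vf finE Sfin[OF that(1)]])
    show "fst ` (R' \<union> (\<lambda>u. (C ! u, g u)) ` J) \<subseteq> V" using SV[OF that(1)] Sfst by simp
    show "inj_on fst (R' \<union> (\<lambda>u. (C ! u, g u)) ` J)" using Sinj[OF that(1)] .
    show "C ! j \<in> V" using CnV that by simp
    show "C ! j \<notin> fst ` (R' \<union> (\<lambda>u. (C ! u, g u)) ` J)" using Snotin[OF that(1-3)] Sfst by simp
    show "C ! j' \<notin> fst ` (R' \<union> (\<lambda>u. (C ! u, g u)) ` J)" using Snotin[OF that(1,4,5)] Sfst by simp
    show "{C ! j', C ! j} \<in> E" using that by simp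
    show "degree E (C ! j) \<le> 4" using deg4 that by simp
  qed

  have nonadj1: "{C ! 1, C ! j} \<notin> E" if "3 \<le> j" "j < n" for j
  proof
    assume e: "{C ! 1, C ! j} \<in> E"
    have sub: "{C ! 1, C ! j} \<subseteq> set C" using that n3 unfolding n_def by auto
    show False
    proof (cases "{C ! 1, C ! j} \<in> cycle_edges C")
      case True
      then have "\<exists>i. {C ! 1, C ! j} = {C ! i, C ! ((i + 1) mod length C)} \<and> i < length C"
        unfolding cycle_edges_def mem_Collect_eq .
      then obtain i where i: "i < n" "{C ! 1, C ! j} = {C ! i, C ! ((i + 1) mod n)}"
        unfolding n_def by metis
      have m: "(i + 1) mod n < n" using n3 by simp
      have one: "1 < n" using n3 by simp
      from i(2) have "(C ! 1 = C ! i \<and> C ! j = C ! ((i + 1) mod n)) \<or> (C ! 1 = C ! ((i + 1) mod n) \<and> C ! j = C ! i)"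
        unfolding doubleton_eq_iff .
      then show False
      proof
        assume h: "C ! 1 = C ! i \<and> C ! j = C ! ((i + 1) mod n)"
        have "1 = i" using Cinj[OF one i(1)] h by blast
        moreover have "j = (i + 1) mod n" using Cinj[OF that(2) m] h by blast
        ultimately have "i = 1" "j = (i + 1) mod n" by simp_all
        then have "j = 2" using n3 by simp
        with that show False by simp
      next
        assume h: "C ! 1 = C ! ((i + 1) mod n) \<and> C ! j = C ! i"
        have im: "1 = (i + 1) mod n" using Cinj[OF one m] h by blast
        have ij: "j = i" using Cinj[OF that(2) i(1)] h by blast
        from im have jm: "1 = (j + 1) mod n" unfolding ij .
        show False
        proof (cases "j + 1 < n")
          case True then have "(j + 1) mod n = j + 1" by simp
          with jm have "j = 0" by linarith
          with that show False by simp
        next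
          case False then have "j + 1 = n" using that(2) by simp
          then have "(j + 1) mod n = 0" by simp
          with jm show False by linarith
        qed
      qed
    next
      case False
      have "{C ! 1, C ! j} \<in> {e \<in> E. e \<subseteq> set C} - cycle_edges C" using e sub False by simp
      with chords_inside have "edge_inside pos curve C {C ! 1, C ! j} \<and> C ! 0 \<in> {C ! 1, C ! j}" by (rule bspec)
      then have "C ! 0 \<in> {C ! 1, C ! j}" by (rule conjunct2)
      moreover have "0 < n" "1 < n" using n3 by auto
      ultimately show False using Cinj that by auto
    qed
  qed
  have nonadjH: "{(C ! 1, a), (C ! j, b)} \<notin> HE" if "3 \<le> j" "j < n" for j a b
  proof (rule dp_nonadj[OF dp])
    show "C ! 1 \<in> V" "C ! j \<in> V" using CnV that n3 by auto
    show "C ! 1 \<noteq> C ! j" using Cinj that n3 by auto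
    show "{C ! 1, C ! j} \<notin> E" by (rule nonadj1[OF that])
  qed
  have x1out: "card {w \<in> V'. {w, C ! 0} \<in> E} \<le> 1"
  proof -
    let ?Eo = "{e \<in> E. C ! 0 \<in> e \<and> \<not> e \<subseteq> set C}"
    have "{e \<in> E. C ! 0 \<in> e} = {e \<in> {e \<in> E. e \<subseteq> set C}. C ! 0 \<in> e} \<union> ?Eo" by auto
    then have "degree E (C ! 0) = card {e \<in> {e \<in> E. e \<subseteq> set C}. C ! 0 \<in> e} + card ?Eo"
      unfolding degree_def using finE by (simp add: card_Un_disjoint disjoint_iff)
    with degG degK have eo: "card ?Eo \<le> 1" unfolding degree_def by simp
    have "card {w \<in> V'. {w, C ! 0} \<in> E} \<le> card ?Eo"
    proof (rule card_inj_on_le[where f = "\<lambda>w. {w, C ! 0}"])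
      show "inj_on (\<lambda>w. {w, C ! 0}) {w \<in> V'. {w, C ! 0} \<in> E}"
        by (auto simp: inj_on_def doubleton_eq_iff)
      show "(\<lambda>w. {w, C ! 0}) ` {w \<in> V'. {w, C ! 0} \<in> E} \<subseteq> ?Eo" unfolding V'_def by auto
      show "finite ?Eo" using finE by simp
    qed
    with eo show ?thesis by simp
  qed
  have x2out: "card {w \<in> V'. {w, C ! 1} \<in> E} \<le> 2"
  proof -
    have e0: "{C ! 0, C ! 1} \<in> E" using esucc[of 0] n3 by simp
    have e2: "{C ! 2, C ! 1} \<in> E" using esucc[of 1] n3 by (simp add: insert_commute numeral_2_eq_2)
    have nin: "C ! 0 \<notin> V'" "C ! 2 \<notin> V'" using CV' n3 by auto
    have ne: "C ! 0 \<noteq> C ! 2" using Cinj n3 by auto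
    have "{w \<in> insert (C ! 0) (insert (C ! 2) V'). {w, C ! 1} \<in> E} = insert (C ! 0) (insert (C ! 2) {w \<in> V'. {w, C ! 1} \<in> E})"
      using e0 e2 by auto
    moreover have "card (insert (C ! 0) (insert (C ! 2) {w \<in> V'. {w, C ! 1} \<in> E})) = card {w \<in> V'. {w, C ! 1} \<in> E} + 2"
      using nin ne finV' by simp
    ultimately have "card {w \<in> V'. {w, C ! 1} \<in> E} + 2 \<le> degree E (C ! 1)"
      using nb_le_degree[OF finE, of "insert (C ! 0) (insert (C ! 2) V')" "C ! 1"] by simp
    with deg4[of 1] n3 show ?thesis by simp
  qed
  have R'V: "fst ` R' \<subseteq> V" using fstR' unfolding V'_def by auto
  have sum1: "(\<Sum>i\<in>{1..s}. cnt HE R' (C ! 0, i)) \<le> 1"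
    using sum_cnt_le[OF dp finR' R'V injR', of "C ! 0"] x1out CnV CV' fstR' n3 by simp
  have sum2: "(\<Sum>i\<in>{1..s}. cnt HE R' (C ! 1, i)) \<le> 2"
    using sum_cnt_le[OF dp finR' R'V injR', of "C ! 1"] x2out CnV CV' fstR' n3 by simp
  have fsum: "4 \<le> (\<Sum>i\<in>{1..s}. f i v)" if "v \<in> V" for v using vf that unfolding valid_F_def by blast
  have fle2: "f i v \<le> 2" if "v \<in> V" "i \<in> {1..s}" for i v using vf that unfolding valid_F_def by fastforce
  have V0: "C ! 0 \<in> V" and V1: "C ! 1 \<in> V" and V2: "C ! 2 \<in> V" using CnV n3 by auto
  have finalize: False
    if ord: "distinct ord" "set ord = {..<n}" and colI: "\<forall>j<n. col j \<in> {1..s}"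
      and okp: "okrel HE f rs' (map (\<lambda>j. (C ! j, col j)) ord)" for ord col
  proof -
    let ?F = "\<lambda>j. (C ! j, col j)"
    let ?L = "rs' @ map ?F ord"
    have setR: "set ?L = R' \<union> ?F ` {..<n}" using rs'(2) ord(2) by simp
    have rep: "representative V s (set ?L)" unfolding representative_def
    proof
      show "set ?L \<subseteq> V \<times> {1..s}" using setR R'sub CnV colI unfolding V'_def by auto
      show "\<forall>v\<in>V. \<exists>!c. (v, c) \<in> set ?L"
      proof
        fix v assume v: "v \<in> V"
        show "\<exists>!c. (v, c) \<in> set ?L"
        proof (cases "v \<in> V'")
          case True
          then obtain c where c: "(v, c) \<in> R'" using R'uniq by blast
          show ?thesis
          proof (rule ex1I[of _ c])
            show "(v, c) \<in> set ?L" using c setR by auto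
            fix c' assume "(v, c') \<in> set ?L"
            then have "(v, c') \<in> R'" using setR True CV' ord(2) by auto
            with R'uniq[OF True] c show "c' = c" by auto
          qed
        next
          case False
          with v obtain j where j: "j < n" "v = C ! j" unfolding V'_def n_def by (auto simp: in_set_conv_nth)
          show ?thesis
          proof (rule ex1I[of _ "col j"])
            show "(v, col j) \<in> set ?L" using setR j by auto
            fix c' assume "(v, c') \<in> set ?L"
            moreover have "(v, c') \<notin> R'" using False fstR' by force
            ultimately obtain j' where "j' < n" "v = C ! j'" "c' = col j'" using setR by auto
            with j Cinj show "c' = col j" by auto
          qed
        qed
      qed
    qed
    have dist: "distinct ?L"
    proof -
      have "inj_on ?F (set ord)" using ord(2) Cinj by (auto simp: inj_on_def)
      then have "distinct (map ?F ord)" using ord(1) by (simp add: distinct_map)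
      moreover have "set rs' \<inter> set (map ?F ord) = {}"
        using rs'(2) fstR' CV' ord(2) by force
      ultimately show ?thesis using rs'(1) by simp
    qed
    have okL: "okrel HE f [] ?L" using ok0 okp okrel_append[of HE f "[]" rs'] by simp
    have "dpF_coloring V s HE f (set ?L)" unfolding dpF_coloring_def
    proof (intro conjI exI[of _ ?L])
      show "representative V s (set ?L)" by (rule rep)
      show "distinct ?L" by (rule dist)
      show "set ?L = set ?L" ..
      show "\<forall>j<length ?L. card {r \<in> set (take j ?L). {r, ?L ! j} \<in> HE} < f (snd (?L ! j)) (fst (?L ! j))"
        using okL unfolding okrel_def cnt_def by simp
    qed
    moreover have "R0 \<subseteq> set ?L" using R'(2) rs'(2) by auto
    ultimately show False using noext by blast
  qed
  have pathcol: "\<exists>col. okrel HE f (rs' @ [(C ! 0, c)]) (map (\<lambda>j. (C ! j, col j)) (rev [lo..<n])) \<and> (\<forall>j\<in>set (rev [lo..<n]). col j \<in> {1..s})"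
    if lo: "2 \<le> lo" for lo c
  proof (rule greedy[where g = "\<lambda>j. C ! j"])
    show "distinct (rev [lo..<n])" by simp
    fix t col assume t: "t < length (rev [lo..<n])"
    define j where "j = n - 1 - t"
    have tl: "t < n - lo" using t by simp
    have jn: "rev [lo..<n] ! t = j" using rev_upt_nth[OF tl] j_def by simp
    have tk: "set (take t (rev [lo..<n])) = {n - t..<n}" using rev_upt_take[of t n lo] tl by simp
    have jb: "lo \<le> j" "j < n" "j = n - t - 1" using tl j_def by auto
    define J where "J = insert 0 {n - t..<n}"
    have eqS: "set (rs' @ [(C ! 0, c)]) \<union> (\<lambda>j. (C ! j, col j)) ` set (take t (rev [lo..<n])) = R' \<union> (\<lambda>u. (C ! u, (col(0 := c)) u)) ` J"
    proof -
      have z: "0 \<notin> {n - t..<n}" using tl lo by auto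
      have img: "(\<lambda>u. (C ! u, (col(0 := c)) u)) ` {n - t..<n} = (\<lambda>u. (C ! u, col u)) ` {n - t..<n}"
        using z by (intro image_cong) auto
      show ?thesis unfolding J_def image_insert img tk using rs'(2) by auto
    qed
    have "\<exists>i\<in>{1..s}. cnt HE (R' \<union> (\<lambda>u. (C ! u, (col(0 := c)) u)) ` J) (C ! j, i) < f i (C ! j)"
    proof (rule stepJ[where j' = "j - 1"])
      show "J \<subseteq> {..<n}" using jb unfolding J_def by auto
      show "j < n" using jb by simp
      show "j \<notin> J" using jb lo unfolding J_def by auto
      show "j - 1 < n" using jb by simp
      show "j - 1 \<notin> J" using jb lo unfolding J_def by auto
      show "{C ! (j - 1), C ! j} \<in> E"
      proof -
        have e: "j - 1 + 1 = j" using jb lo by simp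
        have "j - 1 + 1 < n" using e jb by simp
        from esucc[OF this] show ?thesis unfolding e .
      qed
      show "1 \<le> j" using jb lo by simp
    qed
    then show "\<exists>i\<in>{1..s}. cnt HE (set (rs' @ [(C ! 0, c)]) \<union> (\<lambda>j. (C ! j, col j)) ` set (take t (rev [lo..<n]))) (C ! (rev [lo..<n] ! t), i) < f i (C ! (rev [lo..<n] ! t))"
      using eqS jn by simp
  qed
  have finI: "finite {1..s}" by simp
  show False
  proof (cases "\<exists>a a'. a \<in> {1..s} \<and> a' \<in> {1..s} \<and> a \<noteq> a' \<and> cnt HE R' (C ! 1, a) < f a (C ! 1) \<and> cnt HE R' (C ! 1, a') < f a' (C ! 1)")
    case True
    then obtain a a' where aa: "a \<in> {1..s}" "a' \<in> {1..s}" "a \<noteq> a'"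
      "cnt HE R' (C ! 1, a) < f a (C ! 1)" "cnt HE R' (C ! 1, a') < f a' (C ! 1)" by blast
    have "\<exists>c\<in>{1..s}. (cnt HE R' (C ! 0, c) + 1 < f c (C ! 0)) \<or>
        (cnt HE R' (C ! 0, c) < f c (C ! 0) \<and> {(C ! 1, a), (C ! 0, c)} \<notin> HE \<and> {(C ! 1, a'), (C ! 0, c)} \<notin> HE)"
    proof (rule ccontr)
      assume neg: "\<not> ?thesis"
      define Q where "Q = {c. {(C ! 1, a), (C ! 0, c)} \<in> HE \<or> {(C ! 1, a'), (C ! 0, c)} \<in> HE}"
      have le: "f c (C ! 0) \<le> cnt HE R' (C ! 0, c) + (if c \<in> Q then 1 else 0)" if "c \<in> {1..s}" for c
        using neg that unfolding Q_def by force
      have cq: "card ({1..s} \<inter> {c. {(C ! 1, b), (C ! 0, c)} \<in> HE}) \<le> 1" for b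
      proof -
        have "\<forall>x\<in>{1..s} \<inter> {c. {(C ! 1, b), (C ! 0, c)} \<in> HE}. \<forall>y\<in>{1..s} \<inter> {c. {(C ! 1, b), (C ! 0, c)} \<in> HE}. x = y"
        proof (intro ballI)
          fix x y assume "x \<in> {1..s} \<inter> {c. {(C ! 1, b), (C ! 0, c)} \<in> HE}" "y \<in> {1..s} \<inter> {c. {(C ! 1, b), (C ! 0, c)} \<in> HE}"
          then have "{(C ! 1, b), (C ! 0, x)} \<in> HE" "{(C ! 1, b), (C ! 0, y)} \<in> HE" by auto
          moreover have "C ! 1 \<noteq> C ! 0" using Cinj n3 by auto
          ultimately show "x = y" using dp_match[OF dp V1 V0] by blast
        qed
        then show ?thesis by (simp add: card_le_Suc0_iff_eq)
      qed
      have "{1..s} \<inter> Q = ({1..s} \<inter> {c. {(C ! 1, a), (C ! 0, c)} \<in> HE}) \<union> ({1..s} \<inter> {c. {(C ! 1, a'), (C ! 0, c)} \<in> HE})"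
        unfolding Q_def by auto
      then have cQ: "card ({1..s} \<inter> Q) \<le> 2"
        using card_Un_le[of "{1..s} \<inter> {c. {(C ! 1, a), (C ! 0, c)} \<in> HE}" "{1..s} \<inter> {c. {(C ! 1, a'), (C ! 0, c)} \<in> HE}"]
          cq[of a] cq[of a'] by simp
      have "(\<Sum>i\<in>{1..s}. f i (C ! 0)) \<le> (\<Sum>i\<in>{1..s}. cnt HE R' (C ! 0, i) + (if i \<in> Q then 1 else 0))"
        using le by (intro sum_mono) auto
      also have "\<dots> = (\<Sum>i\<in>{1..s}. cnt HE R' (C ! 0, i)) + card ({1..s} \<inter> Q)"
        by (simp add: sum.distrib sum_indicator_card)
      finally have "(\<Sum>i\<in>{1..s}. f i (C ! 0)) \<le> 3" using sum1 cQ by simp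
      with fsum[OF V0] show False by simp
    qed
    then obtain c where cI: "c \<in> {1..s}" and cc: "(cnt HE R' (C ! 0, c) + 1 < f c (C ! 0)) \<or>
        (cnt HE R' (C ! 0, c) < f c (C ! 0) \<and> {(C ! 1, a), (C ! 0, c)} \<notin> HE \<and> {(C ! 1, a'), (C ! 0, c)} \<notin> HE)"
      by blast
    have c1: "cnt HE (insert (C ! 1, \<alpha>) R') (C ! 0, c) < f c (C ! 0)" if "\<alpha> = a \<or> \<alpha> = a'" for \<alpha>
      using cc
    proof
      assume "cnt HE R' (C ! 0, c) + 1 < f c (C ! 0)"
      with cnt_insert_le[OF finR', of HE "(C ! 1, \<alpha>)" "(C ! 0, c)"] show ?thesis by simp
    next
      assume h: "cnt HE R' (C ! 0, c) < f c (C ! 0) \<and> {(C ! 1, a), (C ! 0, c)} \<notin> HE \<and> {(C ! 1, a'), (C ! 0, c)} \<notin> HE"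
      then have "{(C ! 1, \<alpha>), (C ! 0, c)} \<notin> HE" using that by blast
      with h show ?thesis using cnt_insert_nonadj by metis
    qed
    from pathcol[of 3 c] obtain colP where colP:
      "okrel HE f (rs' @ [(C ! 0, c)]) (map (\<lambda>j. (C ! j, colP j)) (rev [3..<n]))"
      "\<forall>j\<in>set (rev [3..<n]). colP j \<in> {1..s}" by auto
    define P where "P = map (\<lambda>j. (C ! j, colP j)) (rev [3..<n])"
    define J where "J = insert 0 {3..<n}"
    have setP: "set (rs' @ [(C ! 0, c)] @ P) = R' \<union> (\<lambda>u. (C ! u, (colP(0 := c)) u)) ` J"
      using rs'(2) unfolding P_def J_def by auto
    have "\<exists>i\<in>{1..s}. cnt HE (R' \<union> (\<lambda>u. (C ! u, (colP(0 := c)) u)) ` J) (C ! 2, i) < f i (C ! 2)"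
    proof (rule stepJ[where j' = 1])
      show "J \<subseteq> {..<n}" using n3 unfolding J_def by auto
      show "2 < n" "2 \<notin> J" "1 < n" "(1::nat) \<notin> J" "1 \<le> (2::nat)" using n3 unfolding J_def by auto
      show "{C ! 1, C ! 2} \<in> E" using esucc[of 1] n3 by (simp add: numeral_2_eq_2)
    qed
    then obtain p where pI: "p \<in> {1..s}" and pc: "cnt HE (set (rs' @ [(C ! 0, c)] @ P)) (C ! 2, p) < f p (C ! 2)"
      using setP by auto
    obtain \<alpha> where al: "\<alpha> = a \<or> \<alpha> = a'" and alp: "{(C ! 1, \<alpha>), (C ! 2, p)} \<notin> HE"
    proof -
      have "\<not> ({(C ! 2, p), (C ! 1, a)} \<in> HE \<and> {(C ! 2, p), (C ! 1, a')} \<in> HE)"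
      proof
        assume "{(C ! 2, p), (C ! 1, a)} \<in> HE \<and> {(C ! 2, p), (C ! 1, a')} \<in> HE"
        moreover have "C ! 2 \<noteq> C ! 1" using Cinj n3 by auto
        ultimately have "a = a'" using dp_match[OF dp V2 V1] by blast
        with aa(3) show False by simp
      qed
      then show ?thesis using that by (auto simp: insert_commute)
    qed
    define col where "col = colP(0 := c, 1 := \<alpha>, 2 := p)"
    define ord where "ord = [1, 0] @ rev [3..<n] @ [2]"
    have mapP: "map (\<lambda>j. (C ! j, col j)) (rev [3..<n]) = P"
      unfolding P_def col_def by (intro map_cong) auto
    have mapo: "map (\<lambda>j. (C ! j, col j)) ord = [(C ! 1, \<alpha>), (C ! 0, c)] @ P @ [(C ! 2, p)]"
      unfolding ord_def using mapP by (simp add: col_def)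
    have ok1: "okrel HE f rs' [(C ! 1, \<alpha>), (C ! 0, c)]"
    proof -
      have "cnt HE (set rs') (C ! 1, \<alpha>) < f \<alpha> (C ! 1)" using al aa rs'(2) by auto
      moreover have "cnt HE (set (rs' @ [(C ! 1, \<alpha>)])) (C ! 0, c) < f c (C ! 0)" using c1[OF al] rs'(2) by simp
      ultimately show ?thesis using okrel_append[of HE f rs' "[(C ! 1, \<alpha>)]" "[(C ! 0, c)]"] by (simp add: okrel_single)
    qed
    have ok2: "okrel HE f (rs' @ [(C ! 1, \<alpha>), (C ! 0, c)]) P"
    proof (rule okrel_insert[OF colP(1)[folded P_def]])
      show "set (rs' @ [(C ! 1, \<alpha>), (C ! 0, c)]) = insert (C ! 1, \<alpha>) (set (rs' @ [(C ! 0, c)]))" by auto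
      show "\<forall>x\<in>set P. {(C ! 1, \<alpha>), x} \<notin> HE" unfolding P_def using nonadjH by auto
    qed
    have ok3: "okrel HE f (rs' @ [(C ! 1, \<alpha>), (C ! 0, c)] @ P) [(C ! 2, p)]"
    proof -
      have "set (rs' @ [(C ! 1, \<alpha>), (C ! 0, c)] @ P) = insert (C ! 1, \<alpha>) (set (rs' @ [(C ! 0, c)] @ P))" by auto
      then have "cnt HE (set (rs' @ [(C ! 1, \<alpha>), (C ! 0, c)] @ P)) (C ! 2, p) = cnt HE (set (rs' @ [(C ! 0, c)] @ P)) (C ! 2, p)"
        using cnt_insert_nonadj[OF alp] by simp
      with pc show ?thesis by (simp add: okrel_single)
    qed
    have okp: "okrel HE f rs' (map (\<lambda>j. (C ! j, col j)) ord)"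
      unfolding mapo using ok1 ok2 ok3 okrel_append by (metis append.assoc)
    show False
    proof (rule finalize[OF _ _ _ okp])
      show "distinct ord" unfolding ord_def by simp
      show "set ord = {..<n}" unfolding ord_def using n3 by auto
      show "\<forall>j<n. col j \<in> {1..s}" unfolding col_def using cI pI al aa colP(2) by auto
    qed
  next
    case False
    obtain a where aI: "a \<in> {1..s}" and ac: "cnt HE R' (C ! 1, a) < f a (C ! 1)"
      using exists_valid[of "\<lambda>i. cnt HE R' (C ! 1, i)" "{1..s}" "\<lambda>i. f i (C ! 1)"] sum2 fsum[OF V1] by auto
    have oth: "f i (C ! 1) \<le> cnt HE R' (C ! 1, i)" if "i \<in> {1..s}" "i \<noteq> a" for i
      using False aI ac that by force
    have a2: "cnt HE R' (C ! 1, a) + 2 \<le> f a (C ! 1)"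
    proof -
      have "(\<Sum>i\<in>{1..s} - {a}. f i (C ! 1)) \<le> (\<Sum>i\<in>{1..s} - {a}. cnt HE R' (C ! 1, i))"
        using oth by (intro sum_mono) auto
      moreover have "(\<Sum>i\<in>{1..s}. f i (C ! 1)) = f a (C ! 1) + (\<Sum>i\<in>{1..s} - {a}. f i (C ! 1))"
        using sum_split_one[OF finI aI] by blast
      moreover have "(\<Sum>i\<in>{1..s}. cnt HE R' (C ! 1, i)) = cnt HE R' (C ! 1, a) + (\<Sum>i\<in>{1..s} - {a}. cnt HE R' (C ! 1, i))"
        using sum_split_one[OF finI aI] by blast
      ultimately show ?thesis using sum2 fsum[OF V1] by linarith
    qed
    have "\<exists>c\<in>{1..s}. cnt HE R' (C ! 0, c) < f c (C ! 0) \<and> {(C ! 1, a), (C ! 0, c)} \<notin> HE"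
    proof (rule ccontr)
      assume neg: "\<not> ?thesis"
      define Q where "Q = {c. {(C ! 1, a), (C ! 0, c)} \<in> HE}"
      have le: "f c (C ! 0) \<le> cnt HE R' (C ! 0, c) + 2 * (if c \<in> Q then 1 else 0)" if "c \<in> {1..s}" for c
        using neg that fle2[OF V0 that] unfolding Q_def by force
      have cQ: "card ({1..s} \<inter> Q) \<le> 1"
      proof -
        have "\<forall>x\<in>{1..s} \<inter> Q. \<forall>y\<in>{1..s} \<inter> Q. x = y"
        proof (intro ballI)
          fix x y assume "x \<in> {1..s} \<inter> Q" "y \<in> {1..s} \<inter> Q"
          then have "{(C ! 1, a), (C ! 0, x)} \<in> HE" "{(C ! 1, a), (C ! 0, y)} \<in> HE" unfolding Q_def by auto
          moreover have "C ! 1 \<noteq> C ! 0" using Cinj n3 by auto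
          ultimately show "x = y" using dp_match[OF dp V1 V0] by blast
        qed
        then show ?thesis by (simp add: card_le_Suc0_iff_eq)
      qed
      have "(\<Sum>i\<in>{1..s}. f i (C ! 0)) \<le> (\<Sum>i\<in>{1..s}. cnt HE R' (C ! 0, i) + 2 * (if i \<in> Q then 1 else 0))"
        using le by (intro sum_mono) auto
      also have "\<dots> = (\<Sum>i\<in>{1..s}. cnt HE R' (C ! 0, i)) + 2 * card ({1..s} \<inter> Q)"
        by (simp add: sum.distrib sum_distrib_left[symmetric] sum_indicator_card)
      finally have "(\<Sum>i\<in>{1..s}. f i (C ! 0)) \<le> 3" using sum1 cQ by simp
      with fsum[OF V0] show False by simp
    qed
    then obtain c where cI: "c \<in> {1..s}" and cv: "cnt HE R' (C ! 0, c) < f c (C ! 0)"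
      and cn: "{(C ! 1, a), (C ! 0, c)} \<notin> HE" by blast
    from pathcol[of 2 c] obtain colP where colP:
      "okrel HE f (rs' @ [(C ! 0, c)]) (map (\<lambda>j. (C ! j, colP j)) (rev [2..<n]))"
      "\<forall>j\<in>set (rev [2..<n]). colP j \<in> {1..s}" by auto
    define P where "P = map (\<lambda>j. (C ! j, colP j)) (rev [2..<n])"
    have last: "cnt HE (set (rs' @ [(C ! 0, c)] @ P)) (C ! 1, a) < f a (C ! 1)"
    proof -
      have "{r \<in> set (rs' @ [(C ! 0, c)] @ P). {r, (C ! 1, a)} \<in> HE} \<subseteq> insert (C ! 2, colP 2) {r \<in> R'. {r, (C ! 1, a)} \<in> HE}"
      proof
        fix r assume r: "r \<in> {r \<in> set (rs' @ [(C ! 0, c)] @ P). {r, (C ! 1, a)} \<in> HE}"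
        then have rin: "r \<in> R' \<or> r = (C ! 0, c) \<or> (\<exists>j. 2 \<le> j \<and> j < n \<and> r = (C ! j, colP j))" and
          rh: "{r, (C ! 1, a)} \<in> HE" using rs'(2) unfolding P_def by auto
        have "r \<noteq> (C ! 0, c)" using rh cn by (auto simp: insert_commute)
        moreover have "\<not> (\<exists>j. 3 \<le> j \<and> j < n \<and> r = (C ! j, colP j))"
          using rh nonadjH by (auto simp: insert_commute)
        ultimately show "r \<in> insert (C ! 2, colP 2) {r \<in> R'. {r, (C ! 1, a)} \<in> HE}"
          using rin rh by (auto simp: le_less eval_nat_numeral)
      qed
      then have "cnt HE (set (rs' @ [(C ! 0, c)] @ P)) (C ! 1, a) \<le> card (insert (C ! 2, colP 2) {r \<in> R'. {r, (C ! 1, a)} \<in> HE})"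
        unfolding cnt_def using finR' by (intro card_mono) auto
      also have "\<dots> \<le> cnt HE R' (C ! 1, a) + 1" unfolding cnt_def using finR' by (simp add: card_insert_if)
      finally show ?thesis using a2 by simp
    qed
    define col where "col = colP(0 := c, 1 := a)"
    define ord where "ord = [0] @ rev [2..<n] @ [1]"
    have mapP: "map (\<lambda>j. (C ! j, col j)) (rev [2..<n]) = P"
      unfolding P_def col_def by (intro map_cong) auto
    have mapo: "map (\<lambda>j. (C ! j, col j)) ord = [(C ! 0, c)] @ P @ [(C ! 1, a)]"
      unfolding ord_def using mapP by (simp add: col_def)
    have ok1: "okrel HE f rs' [(C ! 0, c)]" using cv rs'(2) by (simp add: okrel_single)
    have ok3: "okrel HE f (rs' @ [(C ! 0, c)] @ P) [(C ! 1, a)]" using last by (simp add: okrel_single)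
    have okp: "okrel HE f rs' (map (\<lambda>j. (C ! j, col j)) ord)"
      unfolding mapo using ok1 colP(1)[folded P_def] ok3 okrel_append by (metis append.assoc)
    show False
    proof (rule finalize[OF _ _ _ okp])
      show "distinct ord" unfolding ord_def by simp
      show "set ord = {..<n}" unfolding ord_def using n3 by auto
      show "\<forall>j<n. col j \<in> {1..s}" unfolding col_def using cI aI colP(2) by auto
    qed
  qed
qed

end
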